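(* On every MAPF-DL instance, and for every choice of tie-breaking, of collisions selected for branching, and of paths returned by the low-level search, CBS-DL generates only finitely many constraint-tree nodes.
   Context: MAPF-DL. An instance consists of a deadline $T_{\mathrm{end}}\in\mathbb{N}$, a finite undirected graph $G=(V,E)$, and $M$ agents $a_1,\dots,a_M$; agent $a_i$ has a start vertex $s_i$ and a goal vertex $g_i$, and the graph distance from $s_i$ to $g_i$ is at most $T_{\mathrm{end}}$. A path for $a_i$ is a map $l_i:\{0,\dots,T_{\mathrm{end}}\}\to V$ with $l_i(0)=s_i$, $l_i(T_{\mathrm{end}})=g_i$, and for each $t\ge1$ either $(l_i(t-1),l_i(t))\in E$ or $l_i(t-1)=l_i(t)$. A plan assigns a path to each agent of some subset (the successful agents); the others are unsuccessful and get no path. Two distinct successful agents $a_i,a_j$ have a vertex collision $(a_i,a_j,v,t)$ if $l_i(t)=l_j(t)=v$, and an edge collision $(a_i,a_j,u,v,t)$ if $u=l_i(t)=l_j(t+1)$ and $v=l_j(t)=l_i(t+1)$. A solution is a plan with no collisions; its cost is the number of unsuccessful agents. Constraints: a vertex constraint $(a_i,v,t)$ forbids $l_i(t)=v$; an edge constraint $(a_i,u,v,t)$ forbids $l_i(t)=u$ together with $l_i(t+1)=v$. A path for $a_i$ obeys a constraint set $C$ if it violates none of the constraints in $C$ concerning $a_i$. Algorithm CBS-DL. Low-level search: given agent $a_i$ and constraint set $C$, it returns some path for $a_i$ obeying $C$ if one exists, and otherwise returns "no path". The high level performs best-first search over a constraint tree (CT); each CT node $N$ has a constraint set $N.C$,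 a plan $N.\mathrm{plan}$, and cost $N.\mathrm{cost}$ = number of agents without a path in $N.\mathrm{plan}$. The root has $C=\emptyset$ and the plan containing a low-level path for every agent (cost $0$). OPEN initially contains the root. Repeat: remove from OPEN a node $N$ of minimum cost (ties arbitrary). If $N.\mathrm{plan}$ has no collision, return it. Otherwise pick some collision in $N.\mathrm{plan}$. For a vertex collision $(a_i,a_j,v,t)$ create two children: one with constraints $N.C\cup\{(a_i,v,t)\}$ and one with $N.C\cup\{(a_j,v,t)\}$; for an edge collision $(a_i,a_j,u,v,t)$ the children get $N.C\cup\{(a_i,u,v,t)\}$ and $N.C\cup\{(a_j,v,u,t)\}$, respectively. Each child copies $N.\mathrm{plan}$, and then the path of the agent named in its new constraint is replaced by the low-level search result for that agent under the child's constraint set (the agent's path is deleted if "no path" is returned); the child's cost is recomputed and the child is inserted into OPEN. *)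

theory Defs
  imports Main "HOL-Library.Multiset"
begin

record 'v inst =
  Tend :: nat
  Vs :: "'v set"
  Es :: "('v \<times> 'v) set"
  nag :: nat
  st :: "nat \<Rightarrow> 'v"
  gl :: "nat \<Rightarrow> 'v"

definition valid_instance :: "'v inst \<Rightarrow> bool" where
  "valid_instance I \<longleftrightarrow> finite (Vs I) \<and> Es I \<subseteq> Vs I \<times> Vs I \<and> sym (Es I) \<and>
     (\<forall>i < nag I. st I i \<in> Vs I \<and> gl I i \<in> Vs I \<and>
        (\<exists>k \<le> Tend I. (st I i, gl I i) \<in> Es I ^^ k))"

text \<open>A path for agent i: the list [l(0), ..., l(Tend)].\<close>
definition is_path :: "'v inst \<Rightarrow> nat \<Rightarrow> 'v list \<Rightarrow> bool" where
  "is_path I i p \<longleftrightarrow> length p = Suc (Tend I) \<and> (\<forall>t \<le> Tend I. p ! t \<in> Vs I) \<and>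
     p ! 0 = st I i \<and> p ! Tend I = gl I i \<and>
     (\<forall>t < Tend I. (p ! t, p ! Suc t) \<in> Es I \<or> p ! t = p ! Suc t)"

text \<open>Constraints: VCon i v t (vertex constraint (a_i,v,t)),
  ECon i u v t (edge constraint (a_i,u,v,t)).\<close>
datatype 'v constr = VCon nat 'v nat | ECon nat 'v 'v nat

definition obeys :: "'v inst \<Rightarrow> 'v constr set \<Rightarrow> nat \<Rightarrow> 'v list \<Rightarrow> bool" where
  "obeys I C i p \<longleftrightarrow>
     (\<forall>v t. VCon i v t \<in> C \<longrightarrow> \<not> (t \<le> Tend I \<and> p ! t = v)) \<and>
     (\<forall>u v t. ECon i u v t \<in> C \<longrightarrow> \<not> (t < Tend I \<and> p ! t = u \<and> p ! Suc t = v))"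

definition lowlevel_ok :: "'v inst \<Rightarrow> nat \<Rightarrow> 'v constr set \<Rightarrow> 'v list option \<Rightarrow> bool" where
  "lowlevel_ok I i C r \<longleftrightarrow>
     (r = None \<and> \<not> (\<exists>p. is_path I i p \<and> obeys I C i p)) \<or>
     (\<exists>p. r = Some p \<and> is_path I i p \<and> obeys I C i p)"

type_synonym 'v plan = "nat \<Rightarrow> 'v list option"

definition vertex_collision :: "'v inst \<Rightarrow> 'v plan \<Rightarrow> nat \<Rightarrow> nat \<Rightarrow> 'v \<Rightarrow> nat \<Rightarrow> bool" where
  "vertex_collision I P i j v t \<longleftrightarrow> i < nag I \<and> j < nag I \<and> i \<noteq> j \<and>
     (\<exists>pi pj. P i = Some pi \<and> P j = Some pj \<and> t \<le> Tend I \<and> pi ! t = v \<and> pj ! t = v)"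

definition edge_collision :: "'v inst \<Rightarrow> 'v plan \<Rightarrow> nat \<Rightarrow> nat \<Rightarrow> 'v \<Rightarrow> 'v \<Rightarrow> nat \<Rightarrow> bool" where
  "edge_collision I P i j u v t \<longleftrightarrow> i < nag I \<and> j < nag I \<and> i \<noteq> j \<and>
     (\<exists>pi pj. P i = Some pi \<and> P j = Some pj \<and> t < Tend I \<and>
        pi ! t = u \<and> pj ! Suc t = u \<and> pj ! t = v \<and> pi ! Suc t = v)"

definition has_collision :: "'v inst \<Rightarrow> 'v plan \<Rightarrow> bool" where
  "has_collision I P \<longleftrightarrow> (\<exists>i j v t. vertex_collision I P i j v t) \<or>
                         (\<exists>i j u v t. edge_collision I P i j u v t)"

definition cost :: "'v inst \<Rightarrow> 'v plan \<Rightarrow> nat" where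
  "cost I P = card {i. i < nag I \<and> P i = None}"

type_synonym 'v node = "'v constr set \<times> 'v plan"

text \<open>High-level state: Running OPEN n  (n = number of CT nodes generated so far),
  or Halted n once the algorithm has returned / stopped.\<close>
datatype 'v state = Running "'v node multiset" nat | Halted nat

fun gen_count :: "'v state \<Rightarrow> nat" where
  "gen_count (Running _ n) = n"
| "gen_count (Halted n) = n"

definition min_cost_in :: "'v inst \<Rightarrow> 'v node \<Rightarrow> 'v node multiset \<Rightarrow> bool" where
  "min_cost_in I N OP \<longleftrightarrow> N \<in># OP \<and> (\<forall>N' \<in># OP. cost I (snd N) \<le> cost I (snd N'))"

text \<open>One iteration of the CBS-DL high level; all choices (tie-breaking, collision,
  low-level paths) are nondeterministic.\<close>
inductive cbs_step :: "'v inst \<Rightarrow> 'v state \<Rightarrow> 'v state \<Rightarrow> bool" for I where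
  empty_open: "cbs_step I (Running {#} n) (Halted n)"
| solution: "min_cost_in I (C, P) OP \<Longrightarrow> \<not> has_collision I P \<Longrightarrow>
     cbs_step I (Running OP n) (Halted n)"
| expand_vertex: "min_cost_in I (C, P) OP \<Longrightarrow> vertex_collision I P i j v t \<Longrightarrow>
     lowlevel_ok I i (insert (VCon i v t) C) r1 \<Longrightarrow>
     lowlevel_ok I j (insert (VCon j v t) C) r2 \<Longrightarrow>
     cbs_step I (Running OP n)
       (Running (OP - {#(C, P)#} + {#(insert (VCon i v t) C, P(i := r1)),
                                   (insert (VCon j v t) C, P(j := r2))#}) (n + 2))"
| expand_edge: "min_cost_in I (C, P) OP \<Longrightarrow> edge_collision I P i j u v t \<Longrightarrow>
     lowlevel_ok I i (insert (ECon i u v t) C) r1 \<Longrightarrow>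
     lowlevel_ok I j (insert (ECon j v u t) C) r2 \<Longrightarrow>
     cbs_step I (Running OP n)
       (Running (OP - {#(C, P)#} + {#(insert (ECon i u v t) C, P(i := r1)),
                                   (insert (ECon j v u t) C, P(j := r2))#}) (n + 2))"
| halted: "cbs_step I (Halted n) (Halted n)"

definition root_plan_ok :: "'v inst \<Rightarrow> 'v plan \<Rightarrow> bool" where
  "root_plan_ok I P0 \<longleftrightarrow> (\<forall>i < nag I. lowlevel_ok I i {} (P0 i)) \<and> (\<forall>i \<ge> nag I. P0 i = None)"

end

theory Submission
  imports Defs
begin

definition UU :: "'v inst \<Rightarrow> 'v constr set" where
  "UU I = (\<lambda>(i,v,t). VCon i v t) ` ({..<nag I} \<times> Vs I \<times> {..Tend I}) \<union>
          (\<lambda>(i,u,v,t). ECon i u v t) ` ({..<nag I} \<times> Vs I \<times> Vs I \<times> {..Tend I})"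

lemma finite_UU: "finite (Vs I) \<Longrightarrow> finite (UU I)"
  unfolding UU_def by (intro finite_UnI finite_imageI finite_cartesian_product) auto

definition good :: "'v inst \<Rightarrow> 'v node \<Rightarrow> bool" where
  "good I N \<longleftrightarrow> fst N \<subseteq> UU I \<and> (\<forall>k p. snd N k = Some p \<longrightarrow> is_path I k p \<and> obeys I (fst N) k p)"

fun agent_of :: "'v constr \<Rightarrow> nat" where
  "agent_of (VCon i _ _) = i" | "agent_of (ECon i _ _ _) = i"

lemma obeys_insert_other: "agent_of c \<noteq> k \<Longrightarrow> obeys I (insert c C) k p = obeys I C k p"
  by (cases c) (auto simp: obeys_def)

lemma good_child:
  assumes "good I (C,P)" "c \<in> UU I" "agent_of c = i" "lowlevel_ok I i (insert c C) r1"
  shows "good I (insert c C, P(i := r1))"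
  using assms unfolding good_def lowlevel_ok_def
  by (auto simp: obeys_insert_other)

lemma vcol_facts:
  assumes "good I (C,P)" "vertex_collision I P i j v t"
  shows "VCon i v t \<in> UU I" "VCon i v t \<notin> C" "VCon j v t \<in> UU I" "VCon j v t \<notin> C"
proof -
  obtain pi pj where h: "i < nag I" "j < nag I" "P i = Some pi" "P j = Some pj" "t \<le> Tend I"
     "pi ! t = v" "pj ! t = v" using assms(2) unfolding vertex_collision_def by blast
  have pi: "is_path I i pi" "obeys I C i pi" and pj: "is_path I j pj" "obeys I C j pj"
    using assms(1) h unfolding good_def by auto
  have "v \<in> Vs I" using pi(1) h unfolding is_path_def by auto
  then show "VCon i v t \<in> UU I" "VCon j v t \<in> UU I" using h unfolding UU_def by force+
  show "VCon i v t \<notin> C" using pi(2) h unfolding obeys_def by auto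
  show "VCon j v t \<notin> C" using pj(2) h unfolding obeys_def by auto
qed

lemma ecol_facts:
  assumes "good I (C,P)" "edge_collision I P i j u v t"
  shows "ECon i u v t \<in> UU I" "ECon i u v t \<notin> C" "ECon j v u t \<in> UU I" "ECon j v u t \<notin> C"
proof -
  obtain pi pj where h: "i < nag I" "j < nag I" "P i = Some pi" "P j = Some pj" "t < Tend I"
     "pi ! t = u" "pj ! Suc t = u" "pj ! t = v" "pi ! Suc t = v"
    using assms(2) unfolding edge_collision_def by blast
  have pi: "is_path I i pi" "obeys I C i pi" and pj: "is_path I j pj" "obeys I C j pj"
    using assms(1) h unfolding good_def by auto
  have "v \<in> Vs I" "u \<in> Vs I" using pi(1) h unfolding is_path_def
    by (metis less_imp_le_nat Suc_leI)+
  then show "ECon i u v t \<in> UU I" "ECon j v u t \<in> UU I" using h unfolding UU_def by force+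
  show "ECon i u v t \<notin> C" using pi(2) h unfolding obeys_def by auto
  show "ECon j v u t \<notin> C" using pj(2) h unfolding obeys_def by auto
qed

definition ff :: "nat \<Rightarrow> 'v node \<Rightarrow> nat" where
  "ff K N = 2 ^ Suc (K - card (fst N)) - 1"

definition Phi :: "nat \<Rightarrow> 'v node multiset \<Rightarrow> nat" where
  "Phi K OP = sum_mset (image_mset (ff K) OP)"

definition Inv :: "'v inst \<Rightarrow> nat \<Rightarrow> 'v state \<Rightarrow> bool" where
  "Inv I B s = (case s of Running OP n \<Rightarrow> (\<forall>N \<in># OP. good I N) \<and> n + 2 * Phi (card (UU I)) OP \<le> B
               | Halted n \<Rightarrow> n \<le> B)"

lemma Inv_gen: "Inv I B s \<Longrightarrow> gen_count s \<le> B"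
  by (cases s) (auto simp: Inv_def)

lemma expand_pot:
  assumes fin: "finite (UU I)" and g: "good I (C,P)" and mem: "(C,P) \<in># OP"
    and c1: "c1 \<in> UU I" "c1 \<notin> C" and c2: "c2 \<in> UU I" "c2 \<notin> C"
    and B: "n + 2 * Phi (card (UU I)) OP \<le> B"
  shows "n + 2 + 2 * Phi (card (UU I)) (OP - {#(C,P)#} + {#(insert c1 C, P1), (insert c2 C, P2)#}) \<le> B"
proof -
  let ?K = "card (UU I)"
  have CU: "C \<subseteq> UU I" using g unfolding good_def by auto
  have finC: "finite C" using CU fin finite_subset by blast
  have "insert c1 C \<subseteq> UU I" using CU c1 by auto
  hence le: "Suc (card C) \<le> ?K" using card_mono[OF fin] c1 finC by (metis card_insert_disjoint)
  obtain m where m: "?K - card C = Suc m" using le by (metis Suc_diff_le Suc_le_D diff_Suc_Suc)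
  have k1: "?K - card (insert c1 C) = m" using m c1 finC by simp
  have k2: "?K - card (insert c2 C) = m" using m c2 finC by simp
  have fN: "ff ?K (C,P) = 4 * 2^m - 1" unfolding ff_def using m by simp
  have f1: "ff ?K (insert c1 C, P1) = 2 * 2^m - 1" unfolding ff_def using k1 by simp
  have f2: "ff ?K (insert c2 C, P2) = 2 * 2^m - 1" unfolding ff_def using k2 by simp
  have pos: "(1::nat) \<le> 2^m" by simp
  have sum: "Phi ?K OP = ff ?K (C,P) + Phi ?K (OP - {#(C,P)#})"
    unfolding Phi_def using mem by (metis image_mset_add_mset insert_DiffM sum_mset.insert)
  define X where "X = (2::nat)^m"
  define R where "R = Phi ?K (OP - {#(C,P)#})"
  have e: "Phi ?K (OP - {#(C,P)#} + {#(insert c1 C, P1), (insert c2 C, P2)#}) =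
        R + ff ?K (insert c1 C, P1) + ff ?K (insert c2 C, P2)"
    unfolding Phi_def R_def by simp
  have "n + 2 * (4 * X - 1 + R) \<le> B" using B sum fN X_def R_def by simp
  moreover have "1 \<le> X" using pos X_def by simp
  ultimately have "n + 2 + 2 * (R + (2 * X - 1) + (2 * X - 1)) \<le> B"
    by (cases X) simp_all
  then show ?thesis using e f1 f2 X_def by simp
qed

lemma step_inv:
  assumes fin: "finite (UU I)" and inv: "Inv I B s" and st: "cbs_step I s s'"
  shows "Inv I B s'"
  using st inv
proof cases
  case (expand_vertex C P OP i j v t r1 r2 n)
  have mem: "(C,P) \<in># OP" using expand_vertex(3) unfolding min_cost_in_def by auto
  have goods: "\<forall>N \<in># OP. good I N" and B: "n + 2 * Phi (card (UU I)) OP \<le> B"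
    using inv expand_vertex(1) unfolding Inv_def by auto
  have g: "good I (C,P)" using goods mem by auto
  note f = vcol_facts[OF g expand_vertex(4)]
  have g1: "good I (insert (VCon i v t) C, P(i := r1))"
    by (rule good_child[OF g f(1)]) (use expand_vertex(5) in auto)
  have g2: "good I (insert (VCon j v t) C, P(j := r2))"
    by (rule good_child[OF g f(3)]) (use expand_vertex(6) in auto)
  have "\<forall>N \<in># OP - {#(C,P)#}. good I N" using goods by (meson in_diffD)
  then show ?thesis using expand_vertex(2) g1 g2 expand_pot[OF fin g mem f(1,2) f(3,4) B]
    unfolding Inv_def by auto
next
  case (expand_edge C P OP i j u v t r1 r2 n)
  have mem: "(C,P) \<in># OP" using expand_edge(3) unfolding min_cost_in_def by auto
  have goods: "\<forall>N \<in># OP. good I N" and B: "n + 2 * Phi (card (UU I)) OP \<le> B"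
    using inv expand_edge(1) unfolding Inv_def by auto
  have g: "good I (C,P)" using goods mem by auto
  note f = ecol_facts[OF g expand_edge(4)]
  have g1: "good I (insert (ECon i u v t) C, P(i := r1))"
    by (rule good_child[OF g f(1)]) (use expand_edge(5) in auto)
  have g2: "good I (insert (ECon j v u t) C, P(j := r2))"
    by (rule good_child[OF g f(3)]) (use expand_edge(6) in auto)
  have "\<forall>N \<in># OP - {#(C,P)#}. good I N" using goods by (meson in_diffD)
  then show ?thesis using expand_edge(2) g1 g2 expand_pot[OF fin g mem f(1,2) f(3,4) B]
    unfolding Inv_def by auto
qed (auto simp: Inv_def)

theorem lemma1:
  fixes I :: "'v inst" and P0 :: "'v plan" and r :: "nat \<Rightarrow> 'v state"
  assumes "valid_instance I"
    and "root_plan_ok I P0"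
    and "r 0 = Running {#({}, P0)#} 1"
    and "\<forall>k. cbs_step I (r k) (r (Suc k))"
  shows "\<exists>B. \<forall>k. gen_count (r k) \<le> B"
proof -
  have fin: "finite (UU I)" using assms(1) finite_UU unfolding valid_instance_def by blast
  define B where "B = 1 + 2 * Phi (card (UU I)) {#({}, P0)#}"
  have g0: "good I ({}, P0)" using assms(2) unfolding good_def root_plan_ok_def lowlevel_ok_def
    by (metis empty_subsetI fst_conv le_neq_implies_less linorder_le_less_linear
        option.distinct(1) option.inject snd_conv)
  have "Inv I B (r k)" for k
  proof (induction k)
    case 0 then show ?case using assms(3) g0 unfolding Inv_def B_def by simp
  next
    case (Suc k) then show ?case using step_inv[OF fin] assms(4) by blast
  qed
  then show ?thesis using Inv_gen by blast
qed

end
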